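(* Let $k\geq2$ and let $a_1\leq a_2\leq\dots\leq a_k$ be positive integers with $\gcd(a_1,\dots,a_k)=1$, let $S=\langle a_1,\dots,a_k\rangle$, and let $\alpha\geq a_1a_2$ be an integer. Then $$n(S,\alpha)\leq a_1^{k-1}\left(\left\lfloor\frac{\alpha}{a_1}-a_2\right\rfloor+1\right)+\sum_{\lambda=0}^{a_2-1}\left(\left\lfloor a_1\cdot\frac{\lambda+\{\alpha/a_1\}}{a_2}\right\rfloor+1\right)^{k-1}.$$
   Context: $S=\langle a_1,\dots,a_k\rangle=\{\lambda_1a_1+\dots+\lambda_ka_k:\lambda_i\in\mathbb{Z}_{\geq0}\}$; $n(S,\alpha)$ is the number of elements $s\in S$ with $s\leq\alpha$; $\{t\}=t-\lfloor t\rfloor$ denotes the fractional part. *)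

theory Defs
  imports "HOL-Analysis.Analysis"
begin

definition semigroup_gen :: "nat \<Rightarrow> (nat \<Rightarrow> nat) \<Rightarrow> nat set" where
  "semigroup_gen k a = {s. \<exists>lam :: nat \<Rightarrow> nat. s = (\<Sum>i=1..k. lam i * a i)}"

definition count_le :: "nat set \<Rightarrow> int \<Rightarrow> nat" where
  "count_le S \<alpha> = card {s \<in> S. int s \<le> \<alpha>}"

definition fracpart :: "real \<Rightarrow> real" where
  "fracpart t = t - real_of_int \<lfloor>t\<rfloor>"

end

theory Submission
  imports Defs
begin

lemma repr:
  assumes "s \<in> semigroup_gen k a" and "a 1 > 0" and "k \<ge> 1"
  shows "\<exists>j v. v \<in> PiE {2..k} (\<lambda>_. {..<a 1}) \<and> s = j * a 1 + (\<Sum>i\<in>{2..k}. v i * a i)"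
proof -
  obtain lam where s: "s = (\<Sum>i=1..k. lam i * a i)" using assms(1) unfolding semigroup_gen_def by blast
  define v where "v = restrict (\<lambda>i. lam i mod a 1) {2..k}"
  define j where "j = lam 1 + (\<Sum>i\<in>{2..k}. (lam i div a 1) * a i)"
  have v: "v \<in> PiE {2..k} (\<lambda>_. {..<a 1})" unfolding v_def using assms(2) by auto
  have split: "{1..k} = insert 1 {2..k}" using assms(3) by auto
  have "s = lam 1 * a 1 + (\<Sum>i\<in>{2..k}. lam i * a i)" unfolding s split by simp
  also have "(\<Sum>i\<in>{2..k}. lam i * a i) = (\<Sum>i\<in>{2..k}. (lam i div a 1) * a i * a 1 + v i * a i)"
  proof (rule sum.cong)
    fix i assume "i \<in> {2..k}"
    then have vi: "v i = lam i mod a 1" by (simp add: v_def)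
    have "lam i * a i = (lam i div a 1 * a 1 + lam i mod a 1) * a i" by simp
    also have "\<dots> = (lam i div a 1) * a i * a 1 + v i * a i" unfolding vi add_mult_distrib by (simp only: mult_ac)
    finally show "lam i * a i = (lam i div a 1) * a i * a 1 + v i * a i" .
  qed simp
  also have "\<dots> = (\<Sum>i\<in>{2..k}. (lam i div a 1) * a i) * a 1 + (\<Sum>i\<in>{2..k}. v i * a i)"
    by (simp add: sum.distrib sum_distrib_right)
  finally have "s = j * a 1 + (\<Sum>i\<in>{2..k}. v i * a i)" unfolding j_def by (simp add: algebra_simps)
  with v show ?thesis by blast
qed

lemma count_nat:
  fixes k :: nat and a :: "nat \<Rightarrow> nat" and A :: nat
  assumes k: "k \<ge> 2"
    and pos: "a 1 > 0" and pos2: "a 2 > 0"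
    and mono: "\<And>i. 2 \<le> i \<Longrightarrow> i \<le> k \<Longrightarrow> a 2 \<le> a i"
    and Ab: "A \<ge> a 1 * a 2"
  shows "card {s \<in> semigroup_gen k a. s \<le> A}
     \<le> a 1 ^ (k - 1) * (A div a 1 - a 2 + 1)
       + (\<Sum>l<a 2. ((l * a 1 + A mod a 1) div a 2 + 1) ^ (k - 1))"
proof -
  define q where "q = A div a 1"
  define r where "r = A mod a 1"
  define b where "b = a 2"
  define N where "N = q - b"
  define t where "t = (\<lambda>v::nat\<Rightarrow>nat. \<Sum>i\<in>{2..k}. v i * a i)"
  define Box where "Box = PiE {2..k} (\<lambda>_. {..<a 1})"
  define G where "G = (\<lambda>j. (\<lambda>v. j * a 1 + t v) ` {v \<in> Box. j * a 1 + t v \<le> A})"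
  have b0: "b > 0" using pos2 unfolding b_def by simp
  have Aq: "A = q * a 1 + r" unfolding q_def r_def by simp
  have qb: "q \<ge> b"
  proof -
    have "a 1 * b \<le> A" using Ab b_def by simp
    hence "b \<le> A div a 1" using pos by (simp add: less_eq_div_iff_mult_less_eq mult.commute)
    thus ?thesis by (simp add: q_def)
  qed
  have finBox: "finite Box" unfolding Box_def by (simp add: finite_PiE)
  have cardBox: "card Box = a 1 ^ (k - 1)" unfolding Box_def by (simp add: card_PiE)
  have sub: "{s \<in> semigroup_gen k a. s \<le> A} \<subseteq> (\<Union>j\<in>{..q}. G j)"
  proof
    fix s assume "s \<in> {s \<in> semigroup_gen k a. s \<le> A}"
    then have sS: "s \<in> semigroup_gen k a" and sA: "s \<le> A" by auto
    obtain j v where v: "v \<in> Box" and sj: "s = j * a 1 + t v"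
      using repr[OF sS pos] k unfolding Box_def t_def by force
    have "j * a 1 \<le> A" using sA sj by simp
    hence "j \<le> q" unfolding q_def using pos by (simp add: less_eq_div_iff_mult_less_eq)
    moreover have "s \<in> G j" unfolding G_def using v sj sA by auto
    ultimately show "s \<in> (\<Union>j\<in>{..q}. G j)" by blast
  qed
  have finG: "finite (G j)" for j unfolding G_def using finBox by simp
  have cardG1: "card (G j) \<le> a 1 ^ (k - 1)" for j
  proof -
    have "card (G j) \<le> card {v \<in> Box. j * a 1 + t v \<le> A}" unfolding G_def by (rule card_image_le) (simp add: finBox)
    also have "\<dots> \<le> card Box" by (rule card_mono[OF finBox]) auto
    finally show ?thesis using cardBox by simp
  qed
  have cardG2: "card (G (q - l)) \<le> ((l * a 1 + r) div b + 1) ^ (k - 1)" if "l < b" for l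
  proof -
    define M where "M = (l * a 1 + r) div b"
    have "card (G (q - l)) \<le> card {v \<in> Box. (q - l) * a 1 + t v \<le> A}" unfolding G_def by (rule card_image_le) (simp add: finBox)
    also have "\<dots> \<le> card (PiE {2..k} (\<lambda>_. {0..M}))"
    proof (rule card_mono)
      show "finite (PiE {2..k} (\<lambda>_. {0..M}))" by (simp add: finite_PiE)
      show "{v \<in> Box. (q - l) * a 1 + t v \<le> A} \<subseteq> PiE {2..k} (\<lambda>_. {0..M})"
      proof
        fix v assume "v \<in> {v \<in> Box. (q - l) * a 1 + t v \<le> A}"
        then have vB: "v \<in> Box" and vA: "(q - l) * a 1 + t v \<le> A" by auto
        have ql: "l \<le> q" using that qb by simp
        have "A = (q - l) * a 1 + (l * a 1 + r)" using Aq ql by (simp add: algebra_simps)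
        hence tv: "t v \<le> l * a 1 + r" using vA by simp
        have "v i \<le> M" if i: "i \<in> {2..k}" for i
        proof -
          have "v i * b \<le> v i * a i" using mono[of i] i unfolding b_def by simp
          also have "v i * a i \<le> t v" unfolding t_def
            by (rule member_le_sum[where f="\<lambda>i. v i * a i"]) (use i in auto)
          finally have "v i * b \<le> l * a 1 + r" using tv by simp
          thus ?thesis unfolding M_def using b0 by (simp add: less_eq_div_iff_mult_less_eq)
        qed
        thus "v \<in> PiE {2..k} (\<lambda>_. {0..M})" using vB unfolding Box_def by (auto simp: PiE_iff)
      qed
    qed
    also have "\<dots> = (M + 1) ^ (k - 1)" by (simp add: card_PiE)
    finally show ?thesis unfolding M_def .
  qed
  have U: "{..q} = {..N} \<union> (\<lambda>l. q - l) ` {..<b}"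
  proof -
    have "x \<in> {..N} \<union> (\<lambda>l. q - l) ` {..<b}" if "x \<le> q" for x
    proof (cases "x \<le> N")
      case False
      then have "x = q - (q - x)" "q - x < b" using that qb N_def by auto
      thus ?thesis by blast
    qed auto
    moreover have "N \<le> q" using N_def by simp
    ultimately show ?thesis by auto
  qed
  have "card {s \<in> semigroup_gen k a. s \<le> A} \<le> card (\<Union>j\<in>{..q}. G j)"
    by (rule card_mono) (use sub finG in auto)
  also have "\<dots> \<le> (\<Sum>j\<in>{..q}. card (G j))" by (rule card_UN_le) simp
  also have "\<dots> \<le> (\<Sum>j\<in>{..N}. card (G j)) + (\<Sum>j\<in>(\<lambda>l. q - l) ` {..<b}. card (G j))"
    unfolding U by (simp add: sum_Un_nat)
  also have "(\<Sum>j\<in>(\<lambda>l. q - l) ` {..<b}. card (G j)) = (\<Sum>l<b. card (G (q - l)))"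
    by (rule sum.reindex_cong[where l="\<lambda>l. q - l"]) (use qb in \<open>auto simp: inj_on_def\<close>)
  also have "(\<Sum>j\<in>{..N}. card (G j)) \<le> (\<Sum>j\<in>{..N}. a 1 ^ (k - 1))" by (rule sum_mono) (rule cardG1)
  also have "(\<Sum>l<b. card (G (q - l))) \<le> (\<Sum>l<b. ((l * a 1 + r) div b + 1) ^ (k - 1))"
    by (rule sum_mono) (rule cardG2, simp)
  finally show ?thesis unfolding q_def r_def b_def N_def by (simp add: mult.commute)
qed


theorem mainTheorem8:
  fixes k :: nat and a :: "nat \<Rightarrow> nat" and \<alpha> :: int
  assumes "k \<ge> 2"
    and "\<And>i. 1 \<le> i \<Longrightarrow> i \<le> k \<Longrightarrow> a i > 0"
    and "\<And>i j. 1 \<le> i \<Longrightarrow> i \<le> j \<Longrightarrow> j \<le> k \<Longrightarrow> a i \<le> a j"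
    and "Gcd (a ` {1..k}) = 1"
    and "\<alpha> \<ge> int (a 1 * a 2)"
  shows "real (count_le (semigroup_gen k a) \<alpha>)
    \<le> real (a 1) ^ (k - 1) * (real_of_int \<lfloor>real_of_int \<alpha> / real (a 1) - real (a 2)\<rfloor> + 1)
      + (\<Sum>l = 0..<a 2.
          (real_of_int \<lfloor>real (a 1) * ((real l + fracpart (real_of_int \<alpha> / real (a 1))) / real (a 2))\<rfloor> + 1) ^ (k - 1))"
proof -
  define A where "A = nat \<alpha>"
  have "0 \<le> int (a 1 * a 2)" by simp
  hence aA: "\<alpha> = int A" unfolding A_def using assms(5) by linarith
  have p1: "a 1 > 0" using assms(1,2) by simp
  have p2: "a 2 > 0" using assms(1,2) by simp
  have mono: "\<And>i. 2 \<le> i \<Longrightarrow> i \<le> k \<Longrightarrow> a 2 \<le> a i" using assms(3) by simp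
  have Ab: "A \<ge> a 1 * a 2" using assms(5) unfolding aA by (simp only: of_nat_le_iff)
  define q where "q = A div a 1"
  define r where "r = A mod a 1"
  have Aq: "A = q * a 1 + r" unfolding q_def r_def by simp
  have qb: "q \<ge> a 2"
  proof -
    have "a 1 * a 2 \<le> A" using Ab by simp
    hence "a 2 \<le> A div a 1" using p1 by (simp add: less_eq_div_iff_mult_less_eq mult.commute)
    thus ?thesis by (simp add: q_def)
  qed
  have cnt: "count_le (semigroup_gen k a) \<alpha> = card {s \<in> semigroup_gen k a. s \<le> A}"
    unfolding count_le_def aA by simp
  have N: "card {s \<in> semigroup_gen k a. s \<le> A}
     \<le> a 1 ^ (k - 1) * (q - a 2 + 1)
       + (\<Sum>l<a 2. ((l * a 1 + r) div a 2 + 1) ^ (k - 1))"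
    using count_nat[OF assms(1) p1 p2 mono Ab] unfolding q_def r_def by simp
  have fl1: "\<lfloor>real_of_int \<alpha> / real (a 1) - real (a 2)\<rfloor> = int q - int (a 2)"
  proof -
    have "\<lfloor>real_of_int \<alpha> / real (a 1) - real (a 2)\<rfloor> = \<lfloor>real A / real (a 1) - of_int (int (a 2))\<rfloor>"
      unfolding aA by simp
    also have "\<dots> = \<lfloor>real A / real (a 1)\<rfloor> - int (a 2)" by (rule floor_diff_of_int)
    also have "\<lfloor>real A / real (a 1)\<rfloor> = int q" unfolding q_def by (rule floor_divide_of_nat_eq)
    finally show ?thesis .
  qed
  have fr: "fracpart (real_of_int \<alpha> / real (a 1)) = real r / real (a 1)"
  proof -
    have "\<lfloor>real A / real (a 1)\<rfloor> = int q" unfolding q_def by (rule floor_divide_of_nat_eq)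
    hence "fracpart (real_of_int \<alpha> / real (a 1)) = real A / real (a 1) - real q"
      unfolding fracpart_def aA by simp
    also have "\<dots> = real r / real (a 1)" using p1 unfolding Aq by (simp add: field_simps)
    finally show ?thesis .
  qed
  have fl2: "\<lfloor>real (a 1) * ((real l + fracpart (real_of_int \<alpha> / real (a 1))) / real (a 2))\<rfloor>
      = int ((l * a 1 + r) div a 2)" for l
  proof -
    have "real (a 1) * ((real l + real r / real (a 1)) / real (a 2)) = real (l * a 1 + r) / real (a 2)"
      using p1 p2 by (simp add: field_simps)
    moreover have "\<lfloor>real (l * a 1 + r) / real (a 2)\<rfloor> = int ((l * a 1 + r) div a 2)"
      by (rule floor_divide_of_nat_eq)
    ultimately show ?thesis unfolding fr by metis
  qed
  have "real (count_le (semigroup_gen k a) \<alpha>)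
     \<le> real (a 1 ^ (k - 1) * (q - a 2 + 1) + (\<Sum>l<a 2. ((l * a 1 + r) div a 2 + 1) ^ (k - 1)))"
    unfolding cnt using N by linarith
  also have "\<dots> = real (a 1) ^ (k - 1) * (real_of_int \<lfloor>real_of_int \<alpha> / real (a 1) - real (a 2)\<rfloor> + 1)
      + (\<Sum>l = 0..<a 2.
          (real_of_int \<lfloor>real (a 1) * ((real l + fracpart (real_of_int \<alpha> / real (a 1))) / real (a 2))\<rfloor> + 1) ^ (k - 1))"
  proof -
    obtain d where d: "q = a 2 + d" using qb le_Suc_ex by blast
    have e1: "real (a 1 ^ (k - 1) * (q - a 2 + 1)) = real (a 1) ^ (k - 1) * (real_of_int (int q - int (a 2)) + 1)"
      unfolding d by (simp add: algebra_simps)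
    have e2: "real (\<Sum>l<a 2. ((l * a 1 + r) div a 2 + 1) ^ (k - 1))
       = (\<Sum>l = 0..<a 2. (real_of_int (int ((l * a 1 + r) div a 2)) + 1) ^ (k - 1))"
      by (simp add: atLeast0LessThan add.commute)
    show ?thesis unfolding fl1 fl2 of_nat_add e1 e2 ..
  qed
  finally show ?thesis .
qed

end
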